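(* Let $m,n\geq 2$ be two distinct integers and $k\geq 2$. Then $$\Phi_k (P_m \square P_n)=\frac{1}{4}\left( k^{mn}-k^{m\lceil \frac{n}{2}\rceil}-k^{n\lceil \frac{m}{2}\rceil} -k^{\lceil \frac{mn}{2}\rceil} +2 k^{\lceil \frac{m}{2}\rceil\lceil \frac{n}{2}\rceil}\right).$$
   Context: $P_n$ is the path on $n$ vertices and $\square$ is the Cartesian product ($V(G\square H)=V(G)\times V(H)$, $(g,h)\sim(g',h')$ iff $g=g'$ and $hh'\in E(H)$, or $gg'\in E(G)$ and $h=h'$). A vertex coloring is distinguishing if the identity is the only automorphism preserving it. Two colorings $c_1,c_2$ of a graph $G$ are equivalent if there is an automorphism $\alpha$ of $G$ with $c_1(v)=c_2(\alpha(v))$ for all $v\in V(G)$. $\Phi_k(G)$ denotes the number of non-equivalent distinguishing vertex colorings of $G$ with colors from $\{1,\ldots,k\}$ (not all colors need be used). *)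

theory Defs
  imports Complex_Main "HOL-Library.FuncSet"
begin

definition is_automorphism :: "'a set \<Rightarrow> ('a \<Rightarrow> 'a \<Rightarrow> bool) \<Rightarrow> ('a \<Rightarrow> 'a) \<Rightarrow> bool" where
  "is_automorphism V E f \<longleftrightarrow>
     bij_betw f V V \<and> (\<forall>u\<in>V. \<forall>v\<in>V. E u v \<longleftrightarrow> E (f u) (f v))"

definition distinguishing :: "'a set \<Rightarrow> ('a \<Rightarrow> 'a \<Rightarrow> bool) \<Rightarrow> ('a \<Rightarrow> 'b) \<Rightarrow> bool" where
  "distinguishing V E c \<longleftrightarrow>
     (\<forall>f. is_automorphism V E f \<and> (\<forall>v\<in>V. c (f v) = c v) \<longrightarrow> (\<forall>v\<in>V. f v = v))"

definition colorings :: "'a set \<Rightarrow> nat \<Rightarrow> ('a \<Rightarrow> nat) set" where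
  "colorings V k = V \<rightarrow>\<^sub>E {1..k}"

definition equivalent_colorings ::
  "'a set \<Rightarrow> ('a \<Rightarrow> 'a \<Rightarrow> bool) \<Rightarrow> nat \<Rightarrow> (('a \<Rightarrow> nat) \<times> ('a \<Rightarrow> nat)) set" where
  "equivalent_colorings V E k =
     {(c1, c2). c1 \<in> colorings V k \<and> c2 \<in> colorings V k \<and>
        (\<exists>\<alpha>. is_automorphism V E \<alpha> \<and> (\<forall>v\<in>V. c1 v = c2 (\<alpha> v)))}"

definition Phi :: "nat \<Rightarrow> 'a set \<Rightarrow> ('a \<Rightarrow> 'a \<Rightarrow> bool) \<Rightarrow> nat" where
  "Phi k V E = card ({c \<in> colorings V k. distinguishing V E c} // equivalent_colorings V E k)"

definition path_V :: "nat \<Rightarrow> nat set" where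
  "path_V n = {0..<n}"

definition path_E :: "nat \<Rightarrow> nat \<Rightarrow> bool" where
  "path_E i j \<longleftrightarrow> i + 1 = j \<or> j + 1 = i"

definition cart_V :: "'a set \<Rightarrow> 'b set \<Rightarrow> ('a \<times> 'b) set" where
  "cart_V V1 V2 = V1 \<times> V2"

definition cart_E :: "('a \<Rightarrow> 'a \<Rightarrow> bool) \<Rightarrow> ('b \<Rightarrow> 'b \<Rightarrow> bool) \<Rightarrow> 'a \<times> 'b \<Rightarrow> 'a \<times> 'b \<Rightarrow> bool" where
  "cart_E E1 E2 x y \<longleftrightarrow>
     (fst x = fst y \<and> E2 (snd x) (snd y)) \<or> (E1 (fst x) (fst y) \<and> snd x = snd y)"

end

theory Submission
  imports Defs
begin


lemma card_colorings: "finite V \<Longrightarrow> card (colorings V k) = k ^ card V"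
  unfolding colorings_def by (simp add: card_PiE)

lemma finite_colorings: "finite V \<Longrightarrow> finite (colorings V k)"
  unfolding colorings_def by (simp add: finite_PiE)

lemma card_invariant_r:
  assumes fin: "finite V" and rV: "r ` V \<subseteq> V" and rr: "\<forall>v\<in>V. r (r v) = r v"
  shows "card {c \<in> colorings V k. \<forall>v\<in>V. c v = c (r v)} = k ^ card (r ` V)"
proof -
  let ?S = "{c \<in> colorings V k. \<forall>v\<in>V. c v = c (r v)}"
  let ?D = "r ` V"
  have "bij_betw (\<lambda>c. restrict c ?D) ?S (?D \<rightarrow>\<^sub>E {1..k})"
  proof (rule bij_betwI[where g="\<lambda>d. \<lambda>v\<in>V. d (r v)"])
    show "(\<lambda>c. restrict c ?D) \<in> ?S \<rightarrow> ?D \<rightarrow>\<^sub>E {1..k}"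
      using rV unfolding colorings_def by (auto simp: PiE_iff)
    show "(\<lambda>d. \<lambda>v\<in>V. d (r v)) \<in> (?D \<rightarrow>\<^sub>E {1..k}) \<rightarrow> ?S"
      using rV rr unfolding colorings_def by (auto simp: PiE_iff)
    show "(\<lambda>v\<in>V. restrict c ?D (r v)) = c" if "c \<in> ?S" for c
    proof
      fix v show "(\<lambda>v\<in>V. restrict c ?D (r v)) v = c v"
        using that unfolding colorings_def by (cases "v \<in> V") (auto simp: PiE_iff extensional_def)
    qed
    show "restrict (\<lambda>v\<in>V. d (r v)) ?D = d" if "d \<in> ?D \<rightarrow>\<^sub>E {1..k}" for d
    proof
      fix v show "restrict (\<lambda>v\<in>V. d (r v)) ?D v = d v"
        using that rV rr by (cases "v \<in> ?D") (auto simp: PiE_iff extensional_def)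
    qed
  qed
  then have "card ?S = card (?D \<rightarrow>\<^sub>E {1..k})" by (rule bij_betw_same_card)
  also have "\<dots> = k ^ card ?D" using fin by (simp add: card_PiE)
  finally show ?thesis .
qed

lemma aut_inv:
  assumes "is_automorphism V E f"
  shows "is_automorphism V E (inv_into V f)"
proof -
  have b: "bij_betw f V V" using assms unfolding is_automorphism_def by auto
  have bi: "bij_betw (inv_into V f) V V" using b by (rule bij_betw_inv_into)
  have "E u v \<longleftrightarrow> E (inv_into V f u) (inv_into V f v)" if "u \<in> V" "v \<in> V" for u v
  proof -
    have "inv_into V f u \<in> V" "inv_into V f v \<in> V" using bi that bij_betw_apply by fastforce+
    moreover have "f (inv_into V f u) = u" "f (inv_into V f v) = v"
      using b that by (auto simp: bij_betw_def f_inv_into_f)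
    ultimately show ?thesis using assms unfolding is_automorphism_def by metis
  qed
  then show ?thesis using bi unfolding is_automorphism_def by auto
qed

lemma aut_comp:
  assumes "is_automorphism V E f" "is_automorphism V E g"
  shows "is_automorphism V E (g \<circ> f)"
proof -
  have "bij_betw (g \<circ> f) V V" using assms unfolding is_automorphism_def by (auto intro: bij_betw_trans)
  moreover have "E u v \<longleftrightarrow> E ((g \<circ> f) u) ((g \<circ> f) v)" if "u \<in> V" "v \<in> V" for u v
  proof -
    have "f u \<in> V" "f v \<in> V" using assms that unfolding is_automorphism_def by (auto simp: bij_betw_apply)
    then show ?thesis using assms that unfolding is_automorphism_def by simp
  qed
  ultimately show ?thesis unfolding is_automorphism_def by auto
qed

lemma aut_id: "is_automorphism V E id"
  unfolding is_automorphism_def by auto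

lemma equiv_col: "equiv (colorings V k) (equivalent_colorings V E k)"
proof (rule equivI)
  show "equivalent_colorings V E k \<subseteq> colorings V k \<times> colorings V k"
    unfolding equivalent_colorings_def by auto
  show "refl_on (colorings V k) (equivalent_colorings V E k)"
    unfolding refl_on_def equivalent_colorings_def
    by (auto intro!: exI[of _ id] simp: aut_id)
  show "sym (equivalent_colorings V E k)"
  proof (rule symI)
    fix a b assume "(a, b) \<in> equivalent_colorings V E k"
    then obtain \<alpha> where a: "a \<in> colorings V k" "b \<in> colorings V k" "is_automorphism V E \<alpha>"
      "\<forall>v\<in>V. a v = b (\<alpha> v)" unfolding equivalent_colorings_def by auto
    have b: "bij_betw \<alpha> V V" using a unfolding is_automorphism_def by auto
    have "\<forall>v\<in>V. b v = a (inv_into V \<alpha> v)"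
    proof
      fix v assume v: "v \<in> V"
      have "inv_into V \<alpha> v \<in> V" using b v by (meson bij_betw_apply bij_betw_inv_into)
      moreover have "\<alpha> (inv_into V \<alpha> v) = v" using b v by (auto simp: bij_betw_def f_inv_into_f)
      ultimately show "b v = a (inv_into V \<alpha> v)" using a by metis
    qed
    then show "(b, a) \<in> equivalent_colorings V E k"
      using a aut_inv[OF a(3)] unfolding equivalent_colorings_def by auto
  qed
  show "trans (equivalent_colorings V E k)"
  proof (rule transI)
    fix a b c assume "(a, b) \<in> equivalent_colorings V E k" "(b, c) \<in> equivalent_colorings V E k"
    then obtain \<alpha> \<beta> where a: "a \<in> colorings V k" "b \<in> colorings V k" "c \<in> colorings V k"
      "is_automorphism V E \<alpha>" "\<forall>v\<in>V. a v = b (\<alpha> v)"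
      "is_automorphism V E \<beta>" "\<forall>v\<in>V. b v = c (\<beta> v)" unfolding equivalent_colorings_def by auto
    have "\<forall>v\<in>V. a v = c ((\<beta> \<circ> \<alpha>) v)"
      using a unfolding is_automorphism_def by (auto simp: bij_betw_apply)
    then show "(a, c) \<in> equivalent_colorings V E k"
      using a aut_comp[OF a(4) a(6)] unfolding equivalent_colorings_def by auto
  qed
qed



inductive reach :: "'a set \<Rightarrow> ('a \<Rightarrow> 'a \<Rightarrow> bool) \<Rightarrow> nat \<Rightarrow> 'a \<Rightarrow> 'a \<Rightarrow> bool" for V E where
  r0: "u \<in> V \<Longrightarrow> reach V E 0 u u"
| rs: "reach V E t u w \<Longrightarrow> v \<in> V \<Longrightarrow> E w v \<Longrightarrow> reach V E (Suc t) u v"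
| rw: "reach V E t u v \<Longrightarrow> reach V E (Suc t) u v"

lemma reach_V: "reach V E t u v \<Longrightarrow> u \<in> V \<and> v \<in> V"
  by (induction rule: reach.induct) auto

lemma reach_aut:
  assumes "is_automorphism V E f"
  shows "reach V E t u v \<Longrightarrow> reach V E t (f u) (f v)"
proof (induction rule: reach.induct)
  case (r0 u)
  then show ?case using assms unfolding is_automorphism_def by (auto intro: reach.r0 simp: bij_betw_apply)
next
  case (rs t u w v)
  have "w \<in> V" using rs(1) reach_V by fast
  then have "E (f w) (f v)" using rs assms unfolding is_automorphism_def by auto
  moreover have "f v \<in> V" using rs assms unfolding is_automorphism_def by (auto simp: bij_betw_apply)
  ultimately show ?case using rs by (auto intro: reach.rs)
next
  case (rw t u v)
  then show ?case by (auto intro: reach.rw)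
qed

lemma reach_aut_iff:
  assumes "is_automorphism V E f" "u \<in> V" "v \<in> V"
  shows "reach V E t (f u) (f v) \<longleftrightarrow> reach V E t u v"
proof
  assume "reach V E t (f u) (f v)"
  then have "reach V E t (inv_into V f (f u)) (inv_into V f (f v))"
    using reach_aut[OF aut_inv[OF assms(1)]] by blast
  moreover have "bij_betw f V V" using assms unfolding is_automorphism_def by auto
  ultimately show "reach V E t u v" using assms by (simp add: bij_betw_def)
qed (rule reach_aut[OF assms(1)])

definition gV :: "nat \<Rightarrow> nat \<Rightarrow> (nat \<times> nat) set" where
  "gV m n = {0..<m} \<times> {0..<n}"

abbreviation gE where "gE \<equiv> cart_E path_E path_E"

definition mdist :: "nat \<times> nat \<Rightarrow> nat \<times> nat \<Rightarrow> int" where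
  "mdist u v = \<bar>int (fst u) - int (fst v)\<bar> + \<bar>int (snd u) - int (snd v)\<bar>"

lemma gE_iff: "gE u v \<longleftrightarrow> (fst u = fst v \<and> (snd u + 1 = snd v \<or> snd v + 1 = snd u)) \<or>
   ((fst u + 1 = fst v \<or> fst v + 1 = fst u) \<and> snd u = snd v)"
  unfolding cart_E_def path_E_def by auto

lemma reach_grid1: "reach (gV m n) gE t u v \<Longrightarrow> mdist u v \<le> int t"
proof (induction rule: reach.induct)
  case (r0 u)
  then show ?case by (simp add: mdist_def)
next
  case (rs t u w v)
  then show ?case unfolding gE_iff mdist_def by auto
next
  case (rw t u v)
  then show ?case by simp
qed

lemma reach_grid2: "u \<in> gV m n \<Longrightarrow> v \<in> gV m n \<Longrightarrow> mdist u v \<le> int t \<Longrightarrow> reach (gV m n) gE t u v"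
proof (induction t arbitrary: v)
  case 0
  then have "u = v" unfolding mdist_def by (auto simp: prod_eq_iff)
  then show ?case using 0 by (auto intro: reach.r0)
next
  case (Suc t)
  show ?case
  proof (cases "mdist u v \<le> int t")
    case True
    then show ?thesis using Suc.IH Suc.prems by (blast intro: reach.rw)
  next
    case False
    obtain a b where v: "v = (a, b)" by force
    obtain x y where u: "u = (x, y)" by force
    have ab: "a < m" "b < n" "x < m" "y < n" using Suc.prems v u by (auto simp: gV_def)
    have "\<exists>w \<in> gV m n. mdist u w \<le> int t \<and> gE w v"
    proof (cases "a > x")
      case True
      have "(a - 1, b) \<in> gV m n \<and> mdist u (a - 1, b) \<le> int t \<and> gE (a - 1, b) v"
        using True False Suc.prems ab unfolding u v by (auto simp: gV_def mdist_def gE_iff)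
      then show ?thesis by blast
    next
      case a: False
      show ?thesis
      proof (cases "a < x")
        case True
        have "(a + 1, b) \<in> gV m n \<and> mdist u (a + 1, b) \<le> int t \<and> gE (a + 1, b) v"
            using True False Suc.prems ab unfolding u v by (auto simp: gV_def mdist_def gE_iff)
          then show ?thesis by blast
      next
        case False2: False
        show ?thesis
        proof (cases "b > y")
          case True
          have "(a, b - 1) \<in> gV m n \<and> mdist u (a, b - 1) \<le> int t \<and> gE (a, b - 1) v"
            using True False a False2 Suc.prems ab unfolding u v by (auto simp: gV_def mdist_def gE_iff)
          then show ?thesis by blast
        next
          case False
          have "(a, b + 1) \<in> gV m n \<and> mdist u (a, b + 1) \<le> int t \<and> gE (a, b + 1) v"
            using False \<open>\<not> mdist u v \<le> int t\<close> a False2 Suc.prems ab unfolding u v by (auto simp: gV_def mdist_def gE_iff)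
          then show ?thesis by blast
        qed
      qed
    qed
    then obtain w where w: "w \<in> gV m n" "mdist u w \<le> int t" "gE w v" by blast
    have "reach (gV m n) gE t u w" using Suc.IH[OF Suc.prems(1) w(1,2)] .
    then show ?thesis using w Suc.prems by (blast intro: reach.rs)
  qed
qed

lemma mdist_nonneg: "mdist u v \<ge> 0" unfolding mdist_def by auto

lemma aut_isometry:
  assumes "is_automorphism (gV m n) gE f" "u \<in> gV m n" "v \<in> gV m n"
  shows "mdist (f u) (f v) = mdist u v"
proof -
  have fu: "f u \<in> gV m n" "f v \<in> gV m n" using assms unfolding is_automorphism_def by (auto simp: bij_betw_apply)
  have "reach (gV m n) gE (nat (mdist u v)) u v" using reach_grid2[OF assms(2,3)] mdist_nonneg by simp
  then have "reach (gV m n) gE (nat (mdist u v)) (f u) (f v)" using reach_aut_iff[OF assms] by blast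
  then have 1: "mdist (f u) (f v) \<le> mdist u v" using reach_grid1 mdist_nonneg[of u v] by fastforce
  have "reach (gV m n) gE (nat (mdist (f u) (f v))) (f u) (f v)" using reach_grid2[OF fu] mdist_nonneg by simp
  then have "reach (gV m n) gE (nat (mdist (f u) (f v))) u v" using reach_aut_iff[OF assms] by blast
  then have 2: "mdist u v \<le> mdist (f u) (f v)" using reach_grid1 mdist_nonneg[of "f u" "f v"] by fastforce
  from 1 2 show ?thesis by simp
qed



lemma abs_span:
  fixes a a' :: nat
  assumes "a < m" "a' < m" "\<bar>int a - int a'\<bar> \<ge> int m - 1"
  shows "a = 0 \<and> a' = m - 1 \<or> a = m - 1 \<and> a' = 0"
proof (cases "a \<le> a'")
  case True
  then have "int a' - int a \<ge> int m - 1" using assms by simp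
  then show ?thesis using assms by linarith
next
  case False
  then have "int a - int a' \<ge> int m - 1" using assms by simp
  then show ?thesis using assms by linarith
qed

lemma corner_pair:
  fixes a a' b b' :: nat
  assumes "a < m" "a' < m" "b < n" "b' < n"
    "\<bar>int a - int a'\<bar> + \<bar>int b - int b'\<bar> = int m - 1 + (int n - 1)"
  shows "(a = 0 \<and> a' = m - 1 \<or> a = m - 1 \<and> a' = 0) \<and> (b = 0 \<and> b' = n - 1 \<or> b = n - 1 \<and> b' = 0)"
proof -
  have "\<bar>int a - int a'\<bar> \<le> int m - 1" "\<bar>int b - int b'\<bar> \<le> int n - 1" using assms(1-4) by linarith+
  then have "\<bar>int a - int a'\<bar> \<ge> int m - 1" "\<bar>int b - int b'\<bar> \<ge> int n - 1" using assms(5) by linarith+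
  then show ?thesis using abs_span assms(1-4) by blast
qed

lemma absL: "x < m \<Longrightarrow> \<bar>int x - int (m - 1)\<bar> = int m - 1 - int x" by linarith
lemma absZ: "\<bar>int x - int 0\<bar> = int x" by simp

lemma corner_adj:
  fixes a b p q :: nat
  assumes "m \<ge> 2" "n \<ge> 2" "m \<noteq> n"
    "a = 0 \<or> a = m - 1" "b = 0 \<or> b = n - 1" "p = 0 \<or> p = m - 1" "q = 0 \<or> q = n - 1"
    "\<bar>int p - int a\<bar> + \<bar>int q - int b\<bar> = int m - 1"
  shows "p = m - 1 - a \<and> q = b"
  using assms(4-7)
  by (elim disjE) (use assms in \<open>simp_all add: of_nat_diff\<close>)

lemma point_det:
  fixes a b i j x y :: nat
  assumes "m \<ge> 2" "n \<ge> 2" "i < m" "j < n" "x < m" "y < n"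
    "a = 0 \<or> a = m - 1" "b = 0 \<or> b = n - 1"
    "\<bar>int x - int a\<bar> + \<bar>int y - int b\<bar> = int i + int j"
    "\<bar>int x - int (m - 1 - a)\<bar> + \<bar>int y - int b\<bar> = int m - 1 - int i + int j"
    "\<bar>int x - int (m - 1 - a)\<bar> + \<bar>int y - int (n - 1 - b)\<bar> = int m - 1 - int i + (int n - 1 - int j)"
  shows "x = (if a \<noteq> 0 then m - 1 - i else i) \<and> y = (if b \<noteq> 0 then n - 1 - j else j)"
proof -
  have X: "\<bar>int x - int (m - 1)\<bar> = int m - 1 - int x" "\<bar>int y - int (n - 1)\<bar> = int n - 1 - int y"
    "\<bar>int x - int 0\<bar> = int x" "\<bar>int y - int 0\<bar> = int y"
    using assms by auto
  have Z: "m - 1 - (m - 1) = 0" "n - 1 - (n - 1) = 0" "m - 1 - 0 = m - 1" "n - 1 - 0 = n - 1" by auto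
  have N: "m - 1 \<noteq> 0" "n - 1 \<noteq> 0" using assms by auto
  have I: "int (m - 1 - i) = int m - 1 - int i" "int (n - 1 - j) = int n - 1 - int j" using assms by auto
  show ?thesis using assms(7,8)
  proof (elim disjE)
    assume a: "a = 0" and b: "b = 0"
    have "int x + int y = int i + int j" "int m - 1 - int x + int y = int m - 1 - int i + int j"
      using assms(9,10) unfolding a b Z X .
    then have "int x = int i" "int y = int j" by linarith+
    then show ?thesis using a b by simp
  next
    assume a: "a = 0" and b: "b = n - 1"
    have "int x + (int n - 1 - int y) = int i + int j" "int m - 1 - int x + (int n - 1 - int y) = int m - 1 - int i + int j"
      using assms(9,10) unfolding a b Z X .
    then have "int x = int i" "int y = int (n - 1 - j)" using I by linarith+
    then have "x = i" "y = n - 1 - j" by (simp_all only: of_nat_eq_iff)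
    then show ?thesis using a b N by simp
  next
    assume a: "a = m - 1" and b: "b = 0"
    have "int m - 1 - int x + int y = int i + int j" "int x + int y = int m - 1 - int i + int j"
      using assms(9,10) unfolding a b Z X .
    then have "int x = int (m - 1 - i)" "int y = int j" using I by linarith+
    then have "x = m - 1 - i" "y = j" by (simp_all only: of_nat_eq_iff)
    then show ?thesis using a b N by simp
  next
    assume a: "a = m - 1" and b: "b = n - 1"
    have "int m - 1 - int x + (int n - 1 - int y) = int i + int j" "int x + (int n - 1 - int y) = int m - 1 - int i + int j"
      using assms(9,10) unfolding a b Z X .
    then have "int x = int (m - 1 - i)" "int y = int (n - 1 - j)" using I by linarith+
    then have "x = m - 1 - i" "y = n - 1 - j" by (simp_all only: of_nat_eq_iff)
    then show ?thesis using a b N by simp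
  qed
qed



definition gg :: "nat \<Rightarrow> nat \<Rightarrow> bool \<Rightarrow> bool \<Rightarrow> nat \<times> nat \<Rightarrow> nat \<times> nat" where
  "gg m n s t v = (if s then m - 1 - fst v else fst v, if t then n - 1 - snd v else snd v)"

lemma gg_V: "v \<in> gV m n \<Longrightarrow> gg m n s t v \<in> gV m n"
  unfolding gg_def gV_def by auto

lemma gg_comp: "v \<in> gV m n \<Longrightarrow> gg m n s t (gg m n s' t' v) = gg m n (s \<noteq> s') (t \<noteq> t') v"
  unfolding gg_def gV_def by (auto simp: prod_eq_iff)

lemma gg_FF: "gg m n False False v = v"
  unfolding gg_def by simp

lemma gg_invol: "v \<in> gV m n \<Longrightarrow> gg m n s t (gg m n s t v) = v"
  using gg_comp[of v m n s t s t] by (simp add: gg_FF)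

lemma gg_aut: "is_automorphism (gV m n) gE (gg m n s t)"
proof -
  have "bij_betw (gg m n s t) (gV m n) (gV m n)"
    by (rule bij_betwI[where g="gg m n s t"]) (auto simp: gg_V gg_invol)
  moreover have "gE u v \<longleftrightarrow> gE (gg m n s t u) (gg m n s t v)" if "u \<in> gV m n" "v \<in> gV m n" for u v
    using that unfolding gE_iff gg_def gV_def by auto
  ultimately show ?thesis unfolding is_automorphism_def by auto
qed

lemma gg_nontriv:
  assumes "m \<ge> 2" "n \<ge> 2" "\<forall>v\<in>gV m n. gg m n s t v = v"
  shows "\<not> s \<and> \<not> t"
proof -
  have "(0, 0) \<in> gV m n" using assms unfolding gV_def by auto
  then have "gg m n s t (0, 0) = (0, 0)" using assms by blast
  then show ?thesis using assms unfolding gg_def by (auto split: if_splits)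
qed

lemma aut_gg:
  assumes mn: "m \<ge> 2" "n \<ge> 2" "m \<noteq> n" and f: "is_automorphism (gV m n) gE f"
  shows "\<exists>s t. \<forall>v\<in>gV m n. f v = gg m n s t v"
proof -
  have inV: "\<And>v. v \<in> gV m n \<Longrightarrow> f v \<in> gV m n" using f unfolding is_automorphism_def by (auto simp: bij_betw_apply)
  have iso: "\<And>u v. u \<in> gV m n \<Longrightarrow> v \<in> gV m n \<Longrightarrow> mdist (f u) (f v) = mdist u v"
    using aut_isometry[OF f] by blast
  have P: "(0, 0) \<in> gV m n" "(m - 1, n - 1) \<in> gV m n" "(m - 1, 0) \<in> gV m n" "(0, n - 1) \<in> gV m n"
    using mn unfolding gV_def by auto
  obtain a b where ab: "f (0, 0) = (a, b)" by force
  obtain a' b' where ab': "f (m - 1, n - 1) = (a', b')" by force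
  obtain p q where pq: "f (m - 1, 0) = (p, q)" by force
  obtain p' q' where pq': "f (0, n - 1) = (p', q')" by force
  have bnd: "a < m" "b < n" "a' < m" "b' < n" "p < m" "q < n" "p' < m" "q' < n"
    using inV[OF P(1)] inV[OF P(2)] inV[OF P(3)] inV[OF P(4)] ab ab' pq pq' unfolding gV_def by auto
  have im: "int (m - 1) = int m - 1" "int (n - 1) = int n - 1" using mn by auto
  have "mdist (a, b) (a', b') = int m - 1 + (int n - 1)"
    using iso[OF P(1) P(2)] ab ab' im unfolding mdist_def by simp
  then have c1: "(a = 0 \<and> a' = m - 1 \<or> a = m - 1 \<and> a' = 0) \<and> (b = 0 \<and> b' = n - 1 \<or> b = n - 1 \<and> b' = 0)"
    using corner_pair[of a m a' b n b'] bnd unfolding mdist_def by simp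
  have "mdist (p, q) (p', q') = int m - 1 + (int n - 1)"
    using iso[OF P(3) P(4)] pq pq' im unfolding mdist_def by simp
  then have c2: "(p = 0 \<and> p' = m - 1 \<or> p = m - 1 \<and> p' = 0) \<and> (q = 0 \<and> q' = n - 1 \<or> q = n - 1 \<and> q' = 0)"
    using corner_pair[of p m p' q n q'] bnd unfolding mdist_def by simp
  have "mdist (p, q) (a, b) = int m - 1"
    using iso[OF P(3) P(1)] pq ab im unfolding mdist_def by simp
  then have pqv: "p = m - 1 - a \<and> q = b"
  proof -
    have "a = 0 \<or> a = m - 1" "b = 0 \<or> b = n - 1" "p = 0 \<or> p = m - 1" "q = 0 \<or> q = n - 1"
      using c1 c2 by auto
    then show ?thesis using corner_adj[of m n a b p q] mn \<open>mdist (p, q) (a, b) = int m - 1\<close>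
      unfolding mdist_def by simp
  qed
  have a'v: "a' = m - 1 - a" "b' = n - 1 - b" using c1 by auto
  show ?thesis
  proof (intro exI ballI)
    fix v assume v: "v \<in> gV m n"
    obtain i j where ij: "v = (i, j)" by force
    obtain x y where xy: "f v = (x, y)" by force
    have b2: "i < m" "j < n" "x < m" "y < n" using v inV[OF v] ij xy unfolding gV_def by auto
    have e1: "\<bar>int x - int a\<bar> + \<bar>int y - int b\<bar> = int i + int j"
      using iso[OF v P(1)] xy ab ij unfolding mdist_def by simp
    have e2: "\<bar>int x - int (m - 1 - a)\<bar> + \<bar>int y - int b\<bar> = int m - 1 - int i + int j"
      using iso[OF v P(3)] xy pq pqv ij im b2 unfolding mdist_def by simp
    have e3: "\<bar>int x - int (m - 1 - a)\<bar> + \<bar>int y - int (n - 1 - b)\<bar> = int m - 1 - int i + (int n - 1 - int j)"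
      using iso[OF v P(2)] xy ab' a'v ij im b2 unfolding mdist_def by simp
    have "x = (if a \<noteq> 0 then m - 1 - i else i) \<and> y = (if b \<noteq> 0 then n - 1 - j else j)"
      using point_det[of m n i j x y a b] mn b2 c1 e1 e2 e3 by blast
    then show "f v = gg m n (a \<noteq> 0) (b \<noteq> 0) v" using xy ij unfolding gg_def by simp
  qed
qed

lemma distinguishing_iff:
  assumes mn: "m \<ge> 2" "n \<ge> 2" "m \<noteq> n"
  shows "distinguishing (gV m n) gE c \<longleftrightarrow>
     (\<forall>s t. (\<forall>v\<in>gV m n. c (gg m n s t v) = c v) \<longrightarrow> \<not> s \<and> \<not> t)"
proof
  assume d: "distinguishing (gV m n) gE c"
  show "\<forall>s t. (\<forall>v\<in>gV m n. c (gg m n s t v) = c v) \<longrightarrow> \<not> s \<and> \<not> t"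
  proof (intro allI impI)
    fix s t assume "\<forall>v\<in>gV m n. c (gg m n s t v) = c v"
    then have "\<forall>v\<in>gV m n. gg m n s t v = v" using d gg_aut unfolding distinguishing_def by blast
    then show "\<not> s \<and> \<not> t" using gg_nontriv mn by blast
  qed
next
  assume h: "\<forall>s t. (\<forall>v\<in>gV m n. c (gg m n s t v) = c v) \<longrightarrow> \<not> s \<and> \<not> t"
  show "distinguishing (gV m n) gE c"
    unfolding distinguishing_def
  proof (intro allI impI)
    fix f assume f: "is_automorphism (gV m n) gE f \<and> (\<forall>v\<in>gV m n. c (f v) = c v)"
    then obtain s t where st: "\<forall>v\<in>gV m n. f v = gg m n s t v" using aut_gg mn by blast
    then have "\<not> s \<and> \<not> t" using h f by auto
    then show "\<forall>v\<in>gV m n. f v = v" using st gg_FF by auto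
  qed
qed



lemma card_inv_G:
  assumes fin: "finite V" and G: "\<forall>g\<in>G. \<forall>v\<in>V. g v \<in> V" "\<forall>v\<in>V. \<exists>g\<in>G. r v = g v"
    "\<forall>g\<in>G. \<forall>v\<in>V. r (g v) = r v"
  shows "card {c \<in> colorings V k. \<forall>g\<in>G. \<forall>v\<in>V. c (g v) = c v} = k ^ card (r ` V)"
proof -
  have eq: "(\<forall>g\<in>G. \<forall>v\<in>V. c (g v) = c v) \<longleftrightarrow> (\<forall>v\<in>V. c v = c (r v))" for c
  proof
    assume h: "\<forall>g\<in>G. \<forall>v\<in>V. c (g v) = c v"
    show "\<forall>v\<in>V. c v = c (r v)"
    proof
      fix v assume v: "v \<in> V"
      then obtain g where "g \<in> G" "r v = g v" using G by blast
      then show "c v = c (r v)" using h v by auto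
    qed
  next
    assume h: "\<forall>v\<in>V. c v = c (r v)"
    show "\<forall>g\<in>G. \<forall>v\<in>V. c (g v) = c v"
    proof (intro ballI)
      fix g v assume "g \<in> G" "v \<in> V"
      then have "c (g v) = c (r (g v))" "r (g v) = r v" "c v = c (r v)" using h G by auto
      then show "c (g v) = c v" by simp
    qed
  qed
  have rV: "r ` V \<subseteq> V" using G by fastforce
  have rr: "\<forall>v\<in>V. r (r v) = r v" using G by metis
  have "{c \<in> colorings V k. \<forall>g\<in>G. \<forall>v\<in>V. c (g v) = c v} = {c \<in> colorings V k. \<forall>v\<in>V. c v = c (r v)}"
    using eq by blast
  then show ?thesis using card_invariant_r[OF fin rV rr, of k] by simp
qed

definition hh :: "nat \<Rightarrow> nat \<Rightarrow> nat" where "hh m i = min i (m - 1 - i)"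

lemma hh_image: "hh m ` {0..<m} = {0..<(m + 1) div 2}"
proof
  show "hh m ` {0..<m} \<subseteq> {0..<(m + 1) div 2}" unfolding hh_def by (auto; presburger)
  show "{0..<(m + 1) div 2} \<subseteq> hh m ` {0..<m}"
  proof
    fix x assume "x \<in> {0..<(m + 1) div 2}"
    then have "x < m" "hh m x = x" unfolding hh_def by (auto; presburger)+
    then show "x \<in> hh m ` {0..<m}" by (metis atLeastLessThan_iff image_eqI zero_le)
  qed
qed

lemma finite_gV: "finite (gV m n)" unfolding gV_def by auto

lemma card_gV: "card (gV m n) = m * n" unfolding gV_def by (simp add: card_cartesian_product)

definition Ainv where
  "Ainv m n k s t = {c \<in> colorings (gV m n) k. \<forall>v\<in>gV m n. c (gg m n s t v) = c v}"

lemma card_AX: "card (Ainv m n k True False) = k ^ (((m + 1) div 2) * n)"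
proof -
  let ?G = "{gg m n False False, gg m n True False}"
  let ?r = "map_prod (hh m) id"
  have "card {c \<in> colorings (gV m n) k. \<forall>g\<in>?G. \<forall>v\<in>gV m n. c (g v) = c v} = k ^ card (?r ` gV m n)"
  proof (rule card_inv_G[OF finite_gV])
    show "\<forall>g\<in>?G. \<forall>v\<in>gV m n. g v \<in> gV m n" using gg_V by blast
    show "\<forall>v\<in>gV m n. \<exists>g\<in>?G. ?r v = g v"
    proof
      fix v
      have "?r v = (if fst v > m - 1 - fst v then gg m n True False else gg m n False False) v"
        unfolding gg_def hh_def by (auto simp: min_def prod_eq_iff)
      then show "\<exists>g\<in>?G. ?r v = g v" by (auto split: if_splits)
    qed
    show "\<forall>g\<in>?G. \<forall>v\<in>gV m n. ?r (g v) = ?r v"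
      unfolding gg_def hh_def gV_def by (auto simp: min_def)
  qed
  moreover have "?r ` gV m n = {0..<(m + 1) div 2} \<times> {0..<n}"
    unfolding gV_def by (rule map_prod_surj_on) (auto simp: hh_image)
  moreover have "{c \<in> colorings (gV m n) k. \<forall>g\<in>?G. \<forall>v\<in>gV m n. c (g v) = c v} = Ainv m n k True False"
    unfolding Ainv_def by (auto simp: gg_FF)
  ultimately show ?thesis by (simp add: card_cartesian_product)
qed

lemma card_AY: "card (Ainv m n k False True) = k ^ (m * ((n + 1) div 2))"
proof -
  let ?G = "{gg m n False False, gg m n False True}"
  let ?r = "map_prod id (hh n)"
  have "card {c \<in> colorings (gV m n) k. \<forall>g\<in>?G. \<forall>v\<in>gV m n. c (g v) = c v} = k ^ card (?r ` gV m n)"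
  proof (rule card_inv_G[OF finite_gV])
    show "\<forall>g\<in>?G. \<forall>v\<in>gV m n. g v \<in> gV m n" using gg_V by blast
    show "\<forall>v\<in>gV m n. \<exists>g\<in>?G. ?r v = g v"
    proof
      fix v
      have "?r v = (if snd v > n - 1 - snd v then gg m n False True else gg m n False False) v"
        unfolding gg_def hh_def by (auto simp: min_def prod_eq_iff)
      then show "\<exists>g\<in>?G. ?r v = g v" by (auto split: if_splits)
    qed
    show "\<forall>g\<in>?G. \<forall>v\<in>gV m n. ?r (g v) = ?r v"
      unfolding gg_def hh_def gV_def by (auto simp: min_def)
  qed
  moreover have "?r ` gV m n = {0..<m} \<times> {0..<(n + 1) div 2}"
    unfolding gV_def by (rule map_prod_surj_on) (auto simp: hh_image)
  moreover have "{c \<in> colorings (gV m n) k. \<forall>g\<in>?G. \<forall>v\<in>gV m n. c (g v) = c v} = Ainv m n k False True"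
    unfolding Ainv_def by (auto simp: gg_FF)
  ultimately show ?thesis by (simp add: card_cartesian_product)
qed

definition Ball4 where
  "Ball4 m n k = {c \<in> colorings (gV m n) k. \<forall>g\<in>range (\<lambda>(s, t). gg m n s t). \<forall>v\<in>gV m n. c (g v) = c v}"

lemma card_B: "card (Ball4 m n k) = k ^ (((m + 1) div 2) * ((n + 1) div 2))"
proof -
  let ?G = "range (\<lambda>(s, t). gg m n s t)"
  let ?r = "map_prod (hh m) (hh n)"
  have "card (Ball4 m n k) = k ^ card (?r ` gV m n)"
    unfolding Ball4_def
  proof (rule card_inv_G[OF finite_gV])
    show "\<forall>g\<in>?G. \<forall>v\<in>gV m n. g v \<in> gV m n" using gg_V by auto
    show "\<forall>v\<in>gV m n. \<exists>g\<in>?G. ?r v = g v"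
    proof
      fix v
      have "?r v = gg m n (fst v > m - 1 - fst v) (snd v > n - 1 - snd v) v"
        unfolding gg_def hh_def by (auto simp: min_def prod_eq_iff)
      then show "\<exists>g\<in>?G. ?r v = g v" by blast
    qed
    show "\<forall>g\<in>?G. \<forall>v\<in>gV m n. ?r (g v) = ?r v"
      unfolding gg_def hh_def gV_def by (auto simp: min_def)
  qed
  moreover have "?r ` gV m n = {0..<(m + 1) div 2} \<times> {0..<(n + 1) div 2}"
    unfolding gV_def by (rule map_prod_surj_on) (auto simp: hh_image)
  ultimately show ?thesis by (simp add: card_cartesian_product)
qed



definition lin :: "nat \<Rightarrow> nat \<times> nat \<Rightarrow> nat" where "lin n v = fst v * n + snd v"

lemma lin_sum:
  assumes "v \<in> gV m n"
  shows "lin n v + lin n (gg m n True True v) + 1 = m * n"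
proof -
  obtain i j where v: "v = (i, j)" "i < m" "j < n" using assms unfolding gV_def by auto
  have "(m - 1 - i) * n + i * n = (m - 1) * n" using v by (metis add_mult_distrib le_add_diff_inverse2 less_Suc_eq_le Suc_pred' less_nat_zero_code not_gr_zero diff_le_self)
  moreover have "(m - 1) * n + n = m * n" using v by (metis Suc_pred' mult_Suc less_nat_zero_code not_gr_zero add.commute)
  ultimately show ?thesis using v unfolding lin_def gg_def by auto
qed

lemma lin_inj: "inj_on (lin n) (gV m n)"
proof
  fix v w assume "v \<in> gV m n" "w \<in> gV m n" "lin n v = lin n w"
  then obtain i j i' j' where vw: "v = (i, j)" "w = (i', j')" "j < n" "j' < n" "i * n + j = i' * n + j'"
    unfolding gV_def lin_def by auto
  have "(i * n + j) div n = i" "(i * n + j) mod n = j" using vw(3) by simp_all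
  moreover have "(i' * n + j') div n = i'" "(i' * n + j') mod n = j'" using vw(4) by simp_all
  ultimately show "v = w" using vw by metis
qed

lemma half_iff: "(x::nat) < (N + 1) div 2 \<longleftrightarrow> 2 * x < N" by arith

lemma card_AZ: 
  assumes "m \<ge> 1" "n \<ge> 1"
  shows "card (Ainv m n k True True) = k ^ ((m * n + 1) div 2)"
proof -
  let ?G = "{gg m n False False, gg m n True True}"
  let ?r = "\<lambda>v. if 2 * lin n v < m * n then v else gg m n True True v"
  have "card {c \<in> colorings (gV m n) k. \<forall>g\<in>?G. \<forall>v\<in>gV m n. c (g v) = c v} = k ^ card (?r ` gV m n)"
  proof (rule card_inv_G[OF finite_gV])
    show "\<forall>g\<in>?G. \<forall>v\<in>gV m n. g v \<in> gV m n" using gg_V by blast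
    show "\<forall>v\<in>gV m n. \<exists>g\<in>?G. ?r v = g v"
      by (auto simp: gg_FF)
    show "\<forall>g\<in>?G. \<forall>v\<in>gV m n. ?r (g v) = ?r v"
    proof (intro ballI)
      fix g v assume g: "g \<in> ?G" and v: "v \<in> gV m n"
      let ?w = "gg m n True True v"
      have s: "lin n v + lin n ?w + 1 = m * n" using lin_sum[OF v] .
      have ww: "gg m n True True ?w = v" using gg_invol[OF v] .
      have wV: "?w \<in> gV m n" using gg_V[OF v] .
      have "?r ?w = ?r v"
      proof (cases "2 * lin n v < m * n \<and> 2 * lin n ?w < m * n")
        case True
        then have "lin n v = lin n ?w" using s by linarith
        then have "v = ?w" using lin_inj[of n m] v wV by (meson inj_onD)
        then show ?thesis by simp
      next
        case False
        then show ?thesis using s ww by auto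
      qed
      then show "?r (g v) = ?r v" using g by (auto simp: gg_FF)
    qed
  qed
  moreover have "?r ` gV m n = {v \<in> gV m n. 2 * lin n v < m * n}"
  proof
    show "?r ` gV m n \<subseteq> {v \<in> gV m n. 2 * lin n v < m * n}"
    proof
      fix x assume "x \<in> ?r ` gV m n"
      then obtain v where v: "v \<in> gV m n" "x = ?r v" by blast
      have s: "lin n v + lin n (gg m n True True v) + 1 = m * n" using lin_sum[OF v(1)] .
      show "x \<in> {v \<in> gV m n. 2 * lin n v < m * n}" using v s gg_V[OF v(1)] by auto
    qed
    show "{v \<in> gV m n. 2 * lin n v < m * n} \<subseteq> ?r ` gV m n"
      by (auto intro!: image_eqI)
  qed
  moreover have "card {v \<in> gV m n. 2 * lin n v < m * n} = (m * n + 1) div 2"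
  proof -
    have "lin n ` {v \<in> gV m n. 2 * lin n v < m * n} = {0..<(m * n + 1) div 2}"
    proof
      show "lin n ` {v \<in> gV m n. 2 * lin n v < m * n} \<subseteq> {0..<(m * n + 1) div 2}"
        using half_iff by auto
      show "{0..<(m * n + 1) div 2} \<subseteq> lin n ` {v \<in> gV m n. 2 * lin n v < m * n}"
      proof
        fix x assume "x \<in> {0..<(m * n + 1) div 2}"
        then have x: "2 * x < m * n" using half_iff by auto
        then have "x < m * n" by linarith
        then have "x div n < m" "x mod n < n" using assms
          by (auto simp: less_mult_imp_div_less)
        moreover have "lin n (x div n, x mod n) = x" unfolding lin_def by simp
        ultimately show "x \<in> lin n ` {v \<in> gV m n. 2 * lin n v < m * n}"
          using x unfolding gV_def by (auto intro!: image_eqI[of _ _ "(x div n, x mod n)"])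
      qed
    qed
    moreover have "inj_on (lin n) {v \<in> gV m n. 2 * lin n v < m * n}"
      using lin_inj by (rule inj_on_subset) auto
    then have "card (lin n ` {v \<in> gV m n. 2 * lin n v < m * n}) = card {v \<in> gV m n. 2 * lin n v < m * n}"
      by (rule card_image)
    ultimately show ?thesis by simp
  qed
  moreover have "{c \<in> colorings (gV m n) k. \<forall>g\<in>?G. \<forall>v\<in>gV m n. c (g v) = c v} = Ainv m n k True True"
    unfolding Ainv_def by (auto simp: gg_FF)
  ultimately show ?thesis by simp
qed



lemma nat_ceil_half: "nat \<lceil>real x / 2\<rceil> = (x + 1) div 2"
proof -
  obtain q where "x = 2 * q \<or> x = 2 * q + 1" by (metis dvd_mult_div_cancel odd_two_times_div_two_succ)
  then show ?thesis
  proof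
    assume x: "x = 2 * q"
    then have "\<lceil>real x / 2\<rceil> = int q" by simp
    then show ?thesis using x by simp
  next
    assume x: "x = 2 * q + 1"
    then have "\<lceil>real x / 2\<rceil> = int q + 1" by (intro ceiling_unique) auto
    then show ?thesis using x by simp
  qed
qed

lemma Ainv_comp:
  assumes "c \<in> Ainv m n k s t" "c \<in> Ainv m n k s' t'"
  shows "c \<in> Ainv m n k (s \<noteq> s') (t \<noteq> t')"
proof -
  have "c (gg m n (s \<noteq> s') (t \<noteq> t') v) = c v" if v: "v \<in> gV m n" for v
  proof -
    have "c (gg m n (s \<noteq> s') (t \<noteq> t') v) = c (gg m n s t (gg m n s' t' v))" using gg_comp[OF v] by simp
    also have "\<dots> = c (gg m n s' t' v)" using assms gg_V[OF v] unfolding Ainv_def by blast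
    also have "\<dots> = c v" using assms v unfolding Ainv_def by blast
    finally show ?thesis .
  qed
  then show ?thesis using assms unfolding Ainv_def by auto
qed

lemma Ainv_FF: "c \<in> colorings (gV m n) k \<Longrightarrow> c \<in> Ainv m n k False False"
  unfolding Ainv_def by (simp add: gg_FF)

lemma Ball4_eq: "Ainv m n k True False \<inter> Ainv m n k False True = Ball4 m n k"
proof
  show "Ainv m n k True False \<inter> Ainv m n k False True \<subseteq> Ball4 m n k"
  proof
    fix c assume c: "c \<in> Ainv m n k True False \<inter> Ainv m n k False True"
    have C: "c \<in> colorings (gV m n) k" using c unfolding Ainv_def by auto
    have "c \<in> Ainv m n k s t" for s t
      using c Ainv_comp[of c m n k True False False True] Ainv_FF[OF C] by (cases s; cases t) auto
    then show "c \<in> Ball4 m n k" unfolding Ball4_def Ainv_def by auto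
  qed
  show "Ball4 m n k \<subseteq> Ainv m n k True False \<inter> Ainv m n k False True"
    unfolding Ball4_def Ainv_def by fastforce
qed

lemma inter_XZ: "Ainv m n k True False \<inter> Ainv m n k True True = Ball4 m n k"
  using Ball4_eq[of m n k] Ainv_comp[of _ m n k True False True True] Ainv_comp[of _ m n k True False False True]
  by auto

lemma inter_YZ: "Ainv m n k False True \<inter> Ainv m n k True True = Ball4 m n k"
  using Ball4_eq[of m n k] Ainv_comp[of _ m n k False True True True] Ainv_comp[of _ m n k True False False True]
  by auto

lemma bool4: "(\<forall>s t. P s t \<longrightarrow> \<not> s \<and> \<not> t) \<longleftrightarrow> (\<not> P True False \<and> \<not> P False True \<and> \<not> P True True)"
proof
  assume "\<not> P True False \<and> \<not> P False True \<and> \<not> P True True"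
  then show "\<forall>s t. P s t \<longrightarrow> \<not> s \<and> \<not> t"
    by (intro allI; case_tac s; case_tac t; simp)
qed blast

lemma Dset_eq:
  assumes mn: "m \<ge> 2" "n \<ge> 2" "m \<noteq> n"
  shows "{c \<in> colorings (gV m n) k. distinguishing (gV m n) gE c} =
    colorings (gV m n) k - (Ainv m n k True False \<union> Ainv m n k False True \<union> Ainv m n k True True)"
proof -
  have "distinguishing (gV m n) gE c \<longleftrightarrow>
     c \<notin> Ainv m n k True False \<and> c \<notin> Ainv m n k False True \<and> c \<notin> Ainv m n k True True"
    if "c \<in> colorings (gV m n) k" for c
  proof -
    have "(\<forall>s t. (\<forall>v\<in>gV m n. c (gg m n s t v) = c v) \<longrightarrow> \<not> s \<and> \<not> t) \<longleftrightarrow>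
     c \<notin> Ainv m n k True False \<and> c \<notin> Ainv m n k False True \<and> c \<notin> Ainv m n k True True"
      using that bool4[of "\<lambda>s t. \<forall>v\<in>gV m n. c (gg m n s t v) = c v"] unfolding Ainv_def by simp
    then show ?thesis using distinguishing_iff[OF mn] by blast
  qed
  then show ?thesis by blast
qed

lemma count_D:
  assumes mn: "m \<ge> 2" "n \<ge> 2" "m \<noteq> n"
  shows "card {c \<in> colorings (gV m n) k. distinguishing (gV m n) gE c}
     + card (Ainv m n k True False) + card (Ainv m n k False True) + card (Ainv m n k True True)
     = card (colorings (gV m n) k) + 2 * card (Ball4 m n k)"
proof -
  let ?C = "colorings (gV m n) k"
  let ?X = "Ainv m n k True False" and ?Y = "Ainv m n k False True" and ?Z = "Ainv m n k True True"
  have fC: "finite ?C" by (rule finite_colorings[OF finite_gV])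
  have sub: "?X \<subseteq> ?C" "?Y \<subseteq> ?C" "?Z \<subseteq> ?C" unfolding Ainv_def by auto
  then have fin: "finite ?X" "finite ?Y" "finite ?Z" using fC finite_subset by blast+
  have 1: "card ?X + card ?Y = card (?X \<union> ?Y) + card (Ball4 m n k)"
    using card_Un_Int[OF fin(1,2)] Ball4_eq by simp
  have "(?X \<union> ?Y) \<inter> ?Z = Ball4 m n k" using inter_XZ inter_YZ by blast
  then have 2: "card (?X \<union> ?Y) + card ?Z = card (?X \<union> ?Y \<union> ?Z) + card (Ball4 m n k)"
    using card_Un_Int[of "?X \<union> ?Y" ?Z] fin by simp
  have U: "?X \<union> ?Y \<union> ?Z \<subseteq> ?C" using sub by blast
  have "card (?C - (?X \<union> ?Y \<union> ?Z)) = card ?C - card (?X \<union> ?Y \<union> ?Z)"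
    by (rule card_Diff_subset[OF finite_subset[OF U fC] U])
  moreover have "card (?X \<union> ?Y \<union> ?Z) \<le> card ?C" by (rule card_mono[OF fC U])
  ultimately have "card (?C - (?X \<union> ?Y \<union> ?Z)) + card (?X \<union> ?Y \<union> ?Z) = card ?C" by simp
  then show ?thesis using Dset_eq[OF mn] 1 2 by simp
qed



lemma restrict_in:
  assumes "c \<in> colorings (gV m n) k"
  shows "restrict (c \<circ> gg m n s t) (gV m n) \<in> colorings (gV m n) k"
  using assms gg_V unfolding colorings_def by (auto simp: PiE_iff)

lemma class_eq:
  assumes mn: "m \<ge> 2" "n \<ge> 2" "m \<noteq> n" and c: "c \<in> colorings (gV m n) k"
  shows "equivalent_colorings (gV m n) gE k `` {c} = (\<lambda>(s, t). restrict (c \<circ> gg m n s t) (gV m n)) ` UNIV"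
proof
  show "equivalent_colorings (gV m n) gE k `` {c} \<subseteq> (\<lambda>(s, t). restrict (c \<circ> gg m n s t) (gV m n)) ` UNIV"
  proof
    fix c2 assume "c2 \<in> equivalent_colorings (gV m n) gE k `` {c}"
    then obtain \<alpha> where h: "c2 \<in> colorings (gV m n) k" "is_automorphism (gV m n) gE \<alpha>"
      "\<forall>v\<in>gV m n. c v = c2 (\<alpha> v)" unfolding equivalent_colorings_def by auto
    obtain s t where st: "\<forall>v\<in>gV m n. \<alpha> v = gg m n s t v" using aut_gg[OF mn h(2)] by blast
    have "c2 = restrict (c \<circ> gg m n s t) (gV m n)"
    proof
      fix w show "c2 w = restrict (c \<circ> gg m n s t) (gV m n) w"
      proof (cases "w \<in> gV m n")
        case True
        have gw: "gg m n s t w \<in> gV m n" using gg_V[OF True] .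
        have "c (gg m n s t w) = c2 (\<alpha> (gg m n s t w))" using h(3) gw by blast
        also have "\<alpha> (gg m n s t w) = gg m n s t (gg m n s t w)" using st gw by blast
        finally have "c (gg m n s t w) = c2 (gg m n s t (gg m n s t w))" .
        then show ?thesis using True gg_invol by simp
      next
        case False
        have "c2 w = undefined" using PiE_arb[OF h(1)[unfolded colorings_def] False] .
        then show ?thesis using False by simp
      qed
    qed
    then show "c2 \<in> (\<lambda>(s, t). restrict (c \<circ> gg m n s t) (gV m n)) ` UNIV" by auto
  qed
  show "(\<lambda>(s, t). restrict (c \<circ> gg m n s t) (gV m n)) ` UNIV \<subseteq> equivalent_colorings (gV m n) gE k `` {c}"
  proof
    fix c2 assume "c2 \<in> (\<lambda>(s, t). restrict (c \<circ> gg m n s t) (gV m n)) ` UNIV"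
    then obtain s t where c2: "c2 = restrict (c \<circ> gg m n s t) (gV m n)" by auto
    have inv: "\<forall>v\<in>gV m n. c v = c2 (gg m n s t v)"
    proof
      fix v assume v: "v \<in> gV m n"
      have "gg m n s t v \<in> gV m n" using gg_V[OF v] .
      then show "c v = c2 (gg m n s t v)" using c2 gg_invol[OF v] by simp
    qed
    have C2: "c2 \<in> colorings (gV m n) k" using c2 restrict_in[OF c] by simp
    have A: "is_automorphism (gV m n) gE (gg m n s t)" by (rule gg_aut)
    have "(c, c2) \<in> equivalent_colorings (gV m n) gE k"
      unfolding equivalent_colorings_def using c C2 A inv by blast
    then show "c2 \<in> equivalent_colorings (gV m n) gE k `` {c}" by simp
  qed
qed

lemma card_bool2: "card (UNIV :: (bool \<times> bool) set) = 4"
proof -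
  have e: "(UNIV :: (bool \<times> bool) set) = {(False, False), (False, True), (True, False), (True, True)}"
    by auto
  show ?thesis unfolding e by simp
qed

lemma card_class:
  assumes mn: "m \<ge> 2" "n \<ge> 2" "m \<noteq> n" and c: "c \<in> colorings (gV m n) k"
    and d: "distinguishing (gV m n) gE c"
  shows "card (equivalent_colorings (gV m n) gE k `` {c}) = 4"
proof -
  have "inj_on (\<lambda>(s, t). restrict (c \<circ> gg m n s t) (gV m n)) UNIV"
  proof (rule inj_onI, clarify)
    fix s t s' t'
    assume eq: "restrict (c \<circ> gg m n s t) (gV m n) = restrict (c \<circ> gg m n s' t') (gV m n)"
    have "c (gg m n (s \<noteq> s') (t \<noteq> t') w) = c w" if w: "w \<in> gV m n" for w
    proof -
      have w2: "gg m n s' t' w \<in> gV m n" using gg_V[OF w] .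
      have "c (gg m n s t (gg m n s' t' w)) = c (gg m n s' t' (gg m n s' t' w))"
        using fun_cong[OF eq, of "gg m n s' t' w"] w2 by simp
      then show ?thesis using gg_comp[OF w] gg_invol[OF w] by simp
    qed
    then have "\<not> (s \<noteq> s') \<and> \<not> (t \<noteq> t')" using d distinguishing_iff[OF mn] by blast
    then show "s = s' \<and> t = t'" by simp
  qed
  then have "card ((\<lambda>(s, t). restrict (c \<circ> gg m n s t) (gV m n)) ` UNIV) = 4"
    using card_image card_bool2 by metis
  then show ?thesis using class_eq[OF mn c] by simp
qed

lemma class_closed:
  assumes mn: "m \<ge> 2" "n \<ge> 2" "m \<noteq> n" and c: "c \<in> colorings (gV m n) k"
    and d: "distinguishing (gV m n) gE c"
  shows "equivalent_colorings (gV m n) gE k `` {c} \<subseteq> {c \<in> colorings (gV m n) k. distinguishing (gV m n) gE c}"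
proof
  fix c2 assume "c2 \<in> equivalent_colorings (gV m n) gE k `` {c}"
  then obtain s t where c2: "c2 = restrict (c \<circ> gg m n s t) (gV m n)" using class_eq[OF mn c] by auto
  have C2: "c2 \<in> colorings (gV m n) k" using c2 restrict_in[OF c] by simp
  have "\<not> s' \<and> \<not> t'" if h: "\<forall>v\<in>gV m n. c2 (gg m n s' t' v) = c2 v" for s' t'
  proof -
    have "c (gg m n s' t' w) = c w" if w: "w \<in> gV m n" for w
    proof -
      have v: "gg m n s t w \<in> gV m n" using gg_V[OF w] .
      have "c2 (gg m n s' t' (gg m n s t w)) = c2 (gg m n s t w)" using h v by blast
      moreover have "gg m n s' t' (gg m n s t w) \<in> gV m n" using gg_V[OF v] .
      ultimately have "c (gg m n s t (gg m n s' t' (gg m n s t w))) = c (gg m n s t (gg m n s t w))"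
        using c2 v by simp
      moreover have "gg m n s t (gg m n s' t' (gg m n s t w)) = gg m n s' t' w"
      proof -
        have e1: "gg m n s' t' (gg m n s t w) = gg m n (s' \<noteq> s) (t' \<noteq> t) w" by (rule gg_comp[OF w])
        have e2: "gg m n s t (gg m n (s' \<noteq> s) (t' \<noteq> t) w) = gg m n (s \<noteq> (s' \<noteq> s)) (t \<noteq> (t' \<noteq> t)) w"
          by (rule gg_comp[OF w])
        have e3: "(s \<noteq> (s' \<noteq> s)) = s'" "(t \<noteq> (t' \<noteq> t)) = t'" by auto
        show ?thesis using e1 e2 e3 by simp
      qed
      ultimately show ?thesis using gg_invol[OF w] by simp
    qed
    then show ?thesis using d distinguishing_iff[OF mn] by blast
  qed
  then have "distinguishing (gV m n) gE c2" using distinguishing_iff[OF mn] by blast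
  then show "c2 \<in> {c \<in> colorings (gV m n) k. distinguishing (gV m n) gE c}" using C2 by blast
qed

lemma quotient_count:
  assumes mn: "m \<ge> 2" "n \<ge> 2" "m \<noteq> n"
  shows "4 * card ({c \<in> colorings (gV m n) k. distinguishing (gV m n) gE c} // equivalent_colorings (gV m n) gE k)
       = card {c \<in> colorings (gV m n) k. distinguishing (gV m n) gE c}"
proof -
  let ?C = "colorings (gV m n) k"
  let ?D = "{c \<in> ?C. distinguishing (gV m n) gE c}"
  let ?R = "equivalent_colorings (gV m n) gE k"
  let ?Q = "?D // ?R"
  have Qim: "?Q = (\<lambda>c. ?R `` {c}) ` ?D" unfolding quotient_def by blast
  have fC: "finite ?C" by (rule finite_colorings[OF finite_gV])
  have fD: "finite ?D" using fC by simp
  have eqv: "equiv ?C ?R" by (rule equiv_col)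
  have U: "\<Union> ?Q = ?D"
  proof
    show "\<Union> ?Q \<subseteq> ?D"
    proof
      fix x assume "x \<in> \<Union> ?Q"
      then obtain c where c: "c \<in> ?D" "x \<in> ?R `` {c}" unfolding Qim by blast
      then show "x \<in> ?D" using class_closed[OF mn, of c k] by blast
    qed
    show "?D \<subseteq> \<Union> ?Q"
    proof
      fix c assume c: "c \<in> ?D"
      then have "(c, c) \<in> ?R" using eqv unfolding equiv_def refl_on_def by blast
      then show "c \<in> \<Union> ?Q" using c Qim by blast
    qed
  qed
  have "4 * card ?Q = card (\<Union> ?Q)"
  proof (rule card_partition)
    show "finite ?Q" using Qim fD by simp
    show "finite (\<Union> ?Q)" using U fD by simp
    show "\<And>c. c \<in> ?Q \<Longrightarrow> card c = 4" using Qim card_class[OF mn] by auto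
    show "\<And>c1 c2. c1 \<in> ?Q \<Longrightarrow> c2 \<in> ?Q \<Longrightarrow> c1 \<noteq> c2 \<Longrightarrow> c1 \<inter> c2 = {}"
    proof -
      fix c1 c2 assume "c1 \<in> ?Q" "c2 \<in> ?Q" "c1 \<noteq> c2"
      moreover have "?Q \<subseteq> ?C // ?R" unfolding quotient_def by blast
      ultimately show "c1 \<inter> c2 = {}" using quotient_disj[OF eqv] by blast
    qed
  qed
  then show ?thesis using U by simp
qed


theorem theorem5p1:
  fixes m n k :: nat
  assumes "m \<ge> 2" "n \<ge> 2" "m \<noteq> n" "k \<ge> 2"
  shows "real (Phi k (cart_V (path_V m) (path_V n)) (cart_E path_E path_E)) =
    (1/4) * (real k ^ (m * n)
             - real k ^ (m * nat \<lceil>real n / 2\<rceil>)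
             - real k ^ (n * nat \<lceil>real m / 2\<rceil>)
             - real k ^ (nat \<lceil>real (m * n) / 2\<rceil>)
             + 2 * real k ^ (nat \<lceil>real m / 2\<rceil> * nat \<lceil>real n / 2\<rceil>))"
proof -
  have mn: "m \<ge> 2" "n \<ge> 2" "m \<noteq> n" using assms by auto
  have V: "cart_V (path_V m) (path_V n) = gV m n" by (simp add: cart_V_def path_V_def gV_def)
  define P where "P = Phi k (gV m n) gE"
  have P4: "4 * P = card {c \<in> colorings (gV m n) k. distinguishing (gV m n) gE c}"
    unfolding P_def Phi_def using quotient_count[OF mn] by simp
  have cnt: "card {c \<in> colorings (gV m n) k. distinguishing (gV m n) gE c}
     + card (Ainv m n k True False) + card (Ainv m n k False True) + card (Ainv m n k True True)
     = card (colorings (gV m n) k) + 2 * card (Ball4 m n k)" by (rule count_D[OF mn])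
  have cC: "card (colorings (gV m n) k) = k ^ (m * n)"
    using card_colorings[OF finite_gV, of m n k] card_gV[of m n] by simp
  have cX: "card (Ainv m n k True False) = k ^ (n * ((m + 1) div 2))"
    using card_AX[of m n k] by (simp add: mult.commute)
  have cY: "card (Ainv m n k False True) = k ^ (m * ((n + 1) div 2))" by (rule card_AY)
  have cZ: "card (Ainv m n k True True) = k ^ ((m * n + 1) div 2)" using card_AZ[of m n k] mn by simp
  have cB: "card (Ball4 m n k) = k ^ (((m + 1) div 2) * ((n + 1) div 2))" by (rule card_B)
  have nat_eq: "4 * P + k ^ (n * ((m + 1) div 2)) + k ^ (m * ((n + 1) div 2)) + k ^ ((m * n + 1) div 2)
      = k ^ (m * n) + 2 * k ^ (((m + 1) div 2) * ((n + 1) div 2))"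
    using cnt P4 cC cX cY cZ cB by simp
  then have "real (4 * P + k ^ (n * ((m + 1) div 2)) + k ^ (m * ((n + 1) div 2)) + k ^ ((m * n + 1) div 2))
      = real (k ^ (m * n) + 2 * k ^ (((m + 1) div 2) * ((n + 1) div 2)))" by (simp only:)
  then have re: "4 * real P + real k ^ (n * ((m + 1) div 2)) + real k ^ (m * ((n + 1) div 2)) + real k ^ ((m * n + 1) div 2)
      = real k ^ (m * n) + 2 * real k ^ (((m + 1) div 2) * ((n + 1) div 2))"
    by (simp only: of_nat_add of_nat_mult of_nat_power of_nat_numeral)
  show ?thesis
    unfolding V nat_ceil_half P_def[symmetric] using re by simp
qed

end
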